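(* Let $E$ be a Banach space, $p$ a prime, and $\sigma:E\to E$ a linear isometry with $\sigma^p=\mathrm{id}$, generating a $\mathbb{Z}_p$-action; let $F_\sigma=\{U\in E:\sigma U=U\}$. Let $A\subset E$ be a compact set such that $\mathbb{Z}_p(A):=\bigcup_{i=0}^{p-1}\sigma^i(A)\subset E\setminus F_\sigma$ and $\bigcap_{i=0}^{p-1}\sigma^i(A)=\emptyset$. Then $\gamma(\mathbb{Z}_p(A))\le p-1$.
   Context: For a compact $\sigma$-invariant set $A\subset E\setminus F_\sigma$, the index $\gamma(A)$ is the smallest $m\in\mathbb{N}$ for which there exists a continuous map $h:A\to\mathbb{C}^m\setminus\{0\}$ with $h(\sigma U)=e^{2\pi i/p}h(U)$ for all $U\in A$; $\gamma(A)=\infty$ if no such map exists. *)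

theory Defs
  imports "HOL-Analysis.Analysis" "HOL-Library.Extended_Nat"
begin

definition fixset :: "('a \<Rightarrow> 'a) \<Rightarrow> 'a set" where
  "fixset \<sigma> = {U. \<sigma> U = U}"

definition orbit_set :: "('a \<Rightarrow> 'a) \<Rightarrow> nat \<Rightarrow> 'a set \<Rightarrow> 'a set" where
  "orbit_set \<sigma> p A = (\<Union>i<p. (\<sigma> ^^ i) ` A)"

text \<open>C^m is modelled as the functions nat => complex vanishing at all indices >= m,
  carrying the (product) topology; on this subspace it coincides with the Euclidean one.\<close>
definition cvec :: "nat \<Rightarrow> (nat \<Rightarrow> complex) set" where
  "cvec m = {v. \<forall>j\<ge>m. v j = 0}"

text \<open>Index gamma(A): least m admitting a continuous equivariant map A -> C^m \ {0};
  Inf of the empty set of enat is infinity.\<close>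
definition zp_index :: "('a::topological_space \<Rightarrow> 'a) \<Rightarrow> nat \<Rightarrow> 'a set \<Rightarrow> enat" where
  "zp_index \<sigma> p A = Inf {enat m | m. \<exists>h :: 'a \<Rightarrow> nat \<Rightarrow> complex.
      continuous_on A h \<and> (\<forall>U\<in>A. h U \<in> cvec m \<and> h U \<noteq> (\<lambda>j. 0)) \<and>
      (\<forall>U\<in>A. h (\<sigma> U) = (\<lambda>j. exp (2 * pi * \<i> / of_nat p) * h U j))}"

end

theory Submission
  imports Defs "HOL-Number_Theory.Cong"
begin

lemma zeta_pow:
  "exp (2 * pi * \<i> / of_nat p) ^ n = exp (2 * of_real pi * \<i> * of_nat n / of_nat p)"
proof -
  have "exp (2 * pi * \<i> / of_nat p) ^ n = exp (of_nat n * (2 * pi * \<i> / of_nat p))"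
    by (simp only: exp_of_nat_mult)
  also have "of_nat n * (2 * pi * \<i> / of_nat p) = 2 * of_real pi * \<i> * of_nat n / of_nat p"
    by simp
  finally show ?thesis .
qed

lemma zeta_pow_eq_1:
  assumes "p \<ge> 1"
  shows "exp (2 * pi * \<i> / of_nat p) ^ n = 1 \<longleftrightarrow> p dvd n"
  using zeta_pow[of p n] complex_root_unity_eq_1[OF assms, of n] by simp

lemma zeta_p:
  assumes "p \<ge> 1"
  shows "exp (2 * pi * \<i> / of_nat p) ^ p = 1"
  using zeta_pow_eq_1[OF assms] by simp

lemma zeta_mod:
  assumes "p \<ge> 1"
  shows "exp (2 * pi * \<i> / of_nat p) ^ n = exp (2 * pi * \<i> / of_nat p) ^ (n mod p)"
proof -
  let ?z = "exp (2 * pi * \<i> / of_nat p)"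
  have "?z ^ n = ?z ^ (p * (n div p) + n mod p)" by simp
  also have "\<dots> = (?z ^ p) ^ (n div p) * ?z ^ (n mod p)"
    by (simp only: power_add power_mult)
  also have "\<dots> = ?z ^ (n mod p)" using zeta_p[OF assms] by simp
  finally show ?thesis .
qed

lemma zeta_sum:
  assumes "p \<ge> 1"
  shows "(\<Sum>j<p. (exp (2 * pi * \<i> / of_nat p) ^ n) ^ j) = (if p dvd n then of_nat p else 0)"
proof (cases "p dvd n")
  case True
  then show ?thesis using zeta_pow_eq_1[OF assms, of n] by simp
next
  case False
  let ?z = "exp (2 * pi * \<i> / of_nat p)"
  have ne: "?z ^ n \<noteq> 1" using zeta_pow_eq_1[OF assms, of n] False by simp
  have "(?z ^ n) ^ p = (?z ^ p) ^ n" by (simp add: power_mult[symmetric] mult.commute)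
  also have "\<dots> = 1" using zeta_p[OF assms] by simp
  finally have "(?z ^ n) ^ p = 1" .
  then show ?thesis using ne False by (simp add: sum_gp_strict)
qed

lemma dvd_range:
  fixes k l p :: nat
  assumes "k < p" "l < p" "p dvd (k + (p - l))"
  shows "k = l"
proof -
  obtain q where q: "k + (p - l) = p * q" using assms(3) by (auto simp: dvd_def)
  have "0 < p * q" using q assms by linarith
  hence "q \<ge> 1" by (cases q) auto
  moreover have "p * q < p * 2" using q assms by linarith
  hence "q < 2" by simp
  ultimately have "q = 1" by simp
  then show ?thesis using q assms by simp
qed

theorem mainTheorem15:
  fixes \<sigma> :: "'a::banach \<Rightarrow> 'a" and p :: nat and A :: "'a set"
  assumes "prime p"
    and "linear \<sigma>"
    and "\<And>x. norm (\<sigma> x) = norm x"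
    and "\<sigma> ^^ p = id"
    and "compact A"
    and "orbit_set \<sigma> p A \<subseteq> - fixset \<sigma>"
    and "(\<Inter>i<p. (\<sigma> ^^ i) ` A) = {}"
  shows "zp_index \<sigma> p (orbit_set \<sigma> p A) \<le> enat (p - 1)"
proof -
  define \<zeta> where "\<zeta> = exp (2 * pi * \<i> / of_nat p)"
  define B where "B = orbit_set \<sigma> p A"
  have p2: "p \<ge> 2" using prime_ge_2_nat assms(1) by blast
  hence p1: "p \<ge> 1" by simp
  have zp: "\<zeta> ^ p = 1" unfolding \<zeta>_def using zeta_p[OF p1] .
  have bl: "bounded_linear \<sigma>"
    by (rule bounded_linear_intro[where K=1])
       (auto simp: linear_add[OF assms(2)] linear_scale[OF assms(2)] assms(3))
  have s_cont: "continuous_on S (\<sigma> ^^ k)" for k S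
  proof (induction k)
    case 0 then show ?case by (simp add: continuous_on_id)
  next
    case (Suc k)
    have "continuous_on S (\<sigma> \<circ> (\<sigma> ^^ k))"
      by (rule continuous_on_compose[OF Suc]) (rule linear_continuous_on[OF bl])
    then show ?case by simp
  qed
  have s_add: "(\<sigma> ^^ (m + n)) x = (\<sigma> ^^ m) ((\<sigma> ^^ n) x)" for m n x
    by (simp add: funpow_add)
  have s_sig: "(\<sigma> ^^ k) (\<sigma> x) = (\<sigma> ^^ Suc k) x" for k x
    by (simp add: funpow_swap1)
  define a where "a k U = infdist ((\<sigma> ^^ k) U) A" for k U
  have a_cont: "continuous_on B (\<lambda>U. complex_of_real (a k U))" for k
    unfolding a_def by (intro continuous_on_of_real continuous_on_infdist s_cont)
  have a_sig: "a k (\<sigma> U) = a (Suc k) U" for k U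
    unfolding a_def using s_sig by simp
  have a_p: "a p U = a 0 U" for U
    unfolding a_def using assms(4) by simp
  define h where "h j U = (\<Sum>k<p. complex_of_real (a k U) * \<zeta> ^ (j * k))" for j U
  have h_cont: "continuous_on B (h j)" for j
    unfolding h_def by (intro continuous_intros a_cont)
  have h_eq: "h j U = \<zeta> ^ j * h j (\<sigma> U)" for j U
  proof -
    define f where "f k = complex_of_real (a k U) * \<zeta> ^ (j * k)" for k
    have zjp: "\<zeta> ^ (j * p) = 1"
      by (simp add: mult.commute[of j p] power_mult zp)
    have f0: "f p = f 0" unfolding f_def using a_p zjp by simp
    have "\<zeta> ^ j * h j (\<sigma> U) = (\<Sum>k<p. f (Suc k))"
      unfolding h_def f_def a_sig
      by (simp add: sum_distrib_left algebra_simps power_add)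
    also have "\<dots> = (\<Sum>k<p. f k)"
    proof -
      obtain n where n: "p = Suc n" using p1 by (cases p) auto
      have "(\<Sum>k<Suc n. f (Suc k)) = (\<Sum>k<n. f (Suc k)) + f (Suc n)" by simp
      also have "\<dots> = f 0 + (\<Sum>k<n. f (Suc k))" using f0 n by simp
      also have "\<dots> = (\<Sum>k<Suc n. f k)" by (rule sum.lessThan_Suc_shift[symmetric])
      finally show ?thesis using n by simp
    qed
    also have "\<dots> = h j U" unfolding h_def f_def by simp
    finally show ?thesis by simp
  qed
  define m where "m j = (SOME x. [j * x = Suc 0] (mod p)) * (p - 1)" for j
  have m_cong: "[j * m j = p - 1] (mod p)" if "1 \<le> j" "j < p" for j
  proof -
    have "\<not> p dvd j" using that by (auto dest: dvd_imp_le)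
    hence "coprime j p" using prime_imp_coprime[OF assms(1)] by (simp add: coprime_commute)
    hence "\<exists>x. [j * x = Suc 0] (mod p)" by (rule cong_solve_coprime_nat)
    hence "[j * (SOME x. [j * x = Suc 0] (mod p)) = Suc 0] (mod p)" by (rule someI_ex)
    hence "[j * (SOME x. [j * x = Suc 0] (mod p)) * (p - 1) = Suc 0 * (p - 1)] (mod p)"
      by (rule cong_mult) (rule cong_refl)
    then show ?thesis unfolding m_def by (simp add: mult.assoc)
  qed
  have zm: "\<zeta> ^ (j * m j) = \<zeta> ^ (p - 1)" if "1 \<le> j" "j < p" for j
    using m_cong[OF that] zeta_mod[OF p1, of "j * m j"] zeta_mod[OF p1, of "p - 1"]
    unfolding \<zeta>_def cong_def by simp
  define H where "H j U = (h j U) ^ (m j)" for j U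
  have H_eq: "H j (\<sigma> U) = \<zeta> * H j U" if "1 \<le> j" "j < p" for j U
  proof -
    have "H j U = \<zeta> ^ (j * m j) * H j (\<sigma> U)"
      unfolding H_def h_eq[of j U] by (simp add: power_mult_distrib power_mult)
    hence "\<zeta> * H j U = \<zeta> ^ Suc (p - 1) * H j (\<sigma> U)" using zm[OF that] by simp
    also have "Suc (p - 1) = p" using p1 by simp
    finally show ?thesis using zp by simp
  qed
  define hh where "hh U i = (if i < p - 1 then H (Suc i) U else 0)" for U i
  have hh_cont: "continuous_on B hh"
  proof (rule continuous_on_coordinatewise_then_product)
    fix i
    show "continuous_on B (\<lambda>U. hh U i)"
    proof (cases "i < p - 1")
      case True
      then show ?thesis unfolding hh_def H_def by (simp add: continuous_on_power h_cont)
    next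
      case False
      then show ?thesis unfolding hh_def by simp
    qed
  qed
  have hh_cvec: "hh U \<in> cvec (p - 1)" for U
    unfolding cvec_def hh_def by simp
  have hh_eq: "hh (\<sigma> U) = (\<lambda>j. exp (2 * pi * \<i> / of_nat p) * hh U j)" for U
  proof
    fix i
    show "hh (\<sigma> U) i = exp (2 * pi * \<i> / of_nat p) * hh U i"
      using H_eq[of "Suc i" U] unfolding hh_def \<zeta>_def by simp
  qed
  have hh_nz: "hh U \<noteq> (\<lambda>j. 0)" if U: "U \<in> B" for U
  proof
    assume z: "hh U = (\<lambda>j. 0)"
    have hz: "h (Suc j) U = 0" if "j < p - 1" for j
    proof -
      have "hh U j = 0" using z by simp
      hence "H (Suc j) U = 0" using that unfolding hh_def by simp
      then show ?thesis unfolding H_def by simp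
    qed
    have key: "of_nat p * complex_of_real (a l U) = (\<Sum>k<p. complex_of_real (a k U))"
      if l: "l < p" for l
    proof -
      have "(\<Sum>j<p. h j U * \<zeta> ^ (j * (p - l))) = h 0 U"
      proof -
        obtain n where n: "p = Suc n" using p1 by (cases p) auto
        have "(\<Sum>j<Suc n. h j U * \<zeta> ^ (j * (p - l)))
              = h 0 U * \<zeta> ^ (0 * (p - l)) + (\<Sum>j<n. h (Suc j) U * \<zeta> ^ (Suc j * (p - l)))"
          by (rule sum.lessThan_Suc_shift)
        also have "(\<Sum>j<n. h (Suc j) U * \<zeta> ^ (Suc j * (p - l))) = 0"
          using hz n by (intro sum.neutral) auto
        finally show ?thesis using n by simp
      qed
      moreover have "(\<Sum>j<p. h j U * \<zeta> ^ (j * (p - l)))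
          = (\<Sum>k<p. complex_of_real (a k U) * (\<Sum>j<p. (\<zeta> ^ (k + (p - l))) ^ j))"
      proof -
        have e: "\<zeta> ^ (j * k) * \<zeta> ^ (j * (p - l)) = (\<zeta> ^ (k + (p - l))) ^ j" for j k
          by (simp add: power_add[symmetric] power_mult[symmetric] algebra_simps)
        have "(\<Sum>j<p. h j U * \<zeta> ^ (j * (p - l)))
            = (\<Sum>j<p. \<Sum>k<p. complex_of_real (a k U) * (\<zeta> ^ (j * k) * \<zeta> ^ (j * (p - l))))"
          unfolding h_def by (simp add: sum_distrib_right mult.assoc)
        also have "\<dots> = (\<Sum>k<p. \<Sum>j<p. complex_of_real (a k U) * (\<zeta> ^ (k + (p - l))) ^ j)"
          unfolding e by (rule sum.swap)
        also have "\<dots> = (\<Sum>k<p. complex_of_real (a k U) * (\<Sum>j<p. (\<zeta> ^ (k + (p - l))) ^ j))"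
          by (simp add: sum_distrib_left)
        finally show ?thesis .
      qed
      moreover have "(\<Sum>k<p. complex_of_real (a k U) * (\<Sum>j<p. (\<zeta> ^ (k + (p - l))) ^ j))
          = (\<Sum>k<p. if k = l then complex_of_real (a k U) * of_nat p else 0)"
      proof (rule sum.cong[OF refl])
        fix k assume k: "k \<in> {..<p}"
        have "p dvd (k + (p - l)) \<longleftrightarrow> k = l"
          using dvd_range[of k p l] k l by auto
        then show "complex_of_real (a k U) * (\<Sum>j<p. (\<zeta> ^ (k + (p - l))) ^ j)
            = (if k = l then complex_of_real (a k U) * of_nat p else 0)"
          using zeta_sum[OF p1, of "k + (p - l)"] unfolding \<zeta>_def by auto
      qed
      moreover have "(\<Sum>k<p. if k = l then complex_of_real (a k U) * of_nat p else 0)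
          = complex_of_real (a l U) * of_nat p"
        using l by (simp add: sum.delta)
      moreover have "h 0 U = (\<Sum>k<p. complex_of_real (a k U))" unfolding h_def by simp
      ultimately show ?thesis by (simp add: mult.commute)
    qed
    from U obtain i x where i: "i < p" and x: "x \<in> A" and Ux: "U = (\<sigma> ^^ i) x"
      unfolding B_def orbit_set_def by auto
    have Ane: "A \<noteq> {}" using x by auto
    have clA: "closed A" using assms(5) by (rule compact_imp_closed)
    obtain l0 where l0: "l0 < p" "a l0 U = 0"
    proof (cases "i = 0")
      case True
      then show ?thesis using that[of 0] p1 x Ux unfolding a_def by simp
    next
      case False
      have "(\<sigma> ^^ (p - i)) U = (\<sigma> ^^ (p - i + i)) x" using Ux s_add by simp
      also have "p - i + i = p" using i by simp
      finally have "(\<sigma> ^^ (p - i)) U = x" using assms(4) by simp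
      then show ?thesis using that[of "p - i"] False x i unfolding a_def by simp
    qed
    have S0: "(\<Sum>k<p. complex_of_real (a k U)) = 0" using key[OF l0(1)] l0(2) by simp
    have all0: "a l U = 0" if "l < p" for l
      using key[OF that] S0 p1 by simp
    have inA: "(\<sigma> ^^ l) U \<in> A" if "l < p" for l
      using all0[OF that] in_closed_iff_infdist_zero[OF clA Ane] unfolding a_def by simp
    have "U \<in> (\<Inter>i<p. (\<sigma> ^^ i) ` A)"
    proof
      fix j assume j: "j \<in> {..<p}"
      show "U \<in> (\<sigma> ^^ j) ` A"
      proof (cases "j = 0")
        case True
        then show ?thesis using inA[of 0] p1 by simp
      next
        case False
        have "(\<sigma> ^^ j) ((\<sigma> ^^ (p - j)) U) = (\<sigma> ^^ (j + (p - j))) U" using s_add by simp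
        also have "j + (p - j) = p" using j by simp
        finally have "(\<sigma> ^^ j) ((\<sigma> ^^ (p - j)) U) = U" using assms(4) by simp
        moreover have "(\<sigma> ^^ (p - j)) U \<in> A" using inA[of "p - j"] False j by simp
        ultimately show ?thesis by (metis image_eqI)
      qed
    qed
    then show False using assms(7) by simp
  qed
  have "enat (p - 1) \<in> {enat m | m. \<exists>h :: 'a \<Rightarrow> nat \<Rightarrow> complex.
      continuous_on B h \<and> (\<forall>U\<in>B. h U \<in> cvec m \<and> h U \<noteq> (\<lambda>j. 0)) \<and>
      (\<forall>U\<in>B. h (\<sigma> U) = (\<lambda>j. exp (2 * pi * \<i> / of_nat p) * h U j))}"
    using hh_cont hh_cvec hh_nz hh_eq by blast
  then show ?thesis unfolding zp_index_def B_def by (rule Inf_lower)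
qed

end
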